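(* Let $G$ be a group and $p$ a prime number. If the set $\mathrm{val}_{X^p}(G)\cup \mathrm{val}_{[X,Y]}(G)$ does not generate $G$ in finitely many steps, then for every non-principal ultrafilter $\mathcal U$ on $\omega$, the ultrapower $G^{\omega}/\mathcal U$ admits a surjective homomorphism onto $\mathbb Z/p\mathbb Z$.
   Context: For a group $G$ and a group word $w(\bar X)$, $\mathrm{val}_w(G)=\{w(\bar g) : \bar g \text{ a tuple of elements of } G\}$; thus $\mathrm{val}_{X^p}(G)=\{g^p : g\in G\}$ and $\mathrm{val}_{[X,Y]}(G)=\{[g,h] : g,h\in G\}$. A generating subset $S$ of a group $G$ generates $G$ in $n$ steps if $G = (S^{\pm1}\cup\{1\})^n$, i.e. every element of $G$ is a product of $n$ elements of $S\cup S^{-1}\cup\{1\}$; "$S$ generates $G$ in finitely many steps" means this holds for some $n\in\mathbb N$. $G^{\omega}/\mathcal U$ is the ultrapower of $G$ with respect to $\mathcal U$. *)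

theory Defs
  imports "HOL-Algebra.Algebra" "HOL-Library.FuncSet" "HOL-Computational_Algebra.Primes"
begin

definition grp_comm :: "('a, 'b) monoid_scheme \<Rightarrow> 'a \<Rightarrow> 'a \<Rightarrow> 'a" where
  "grp_comm G g h = inv\<^bsub>G\<^esub> g \<otimes>\<^bsub>G\<^esub> inv\<^bsub>G\<^esub> h \<otimes>\<^bsub>G\<^esub> g \<otimes>\<^bsub>G\<^esub> h"

definition pow_comm_values :: "('a, 'b) monoid_scheme \<Rightarrow> nat \<Rightarrow> 'a set" where
  "pow_comm_values G p =
     {g [^]\<^bsub>G\<^esub> p | g. g \<in> carrier G} \<union> {grp_comm G g h | g h. g \<in> carrier G \<and> h \<in> carrier G}"

fun prod_steps :: "('a, 'b) monoid_scheme \<Rightarrow> 'a set \<Rightarrow> nat \<Rightarrow> 'a set" where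
  "prod_steps G T 0 = {\<one>\<^bsub>G\<^esub>}"
| "prod_steps G T (Suc n) = {a \<otimes>\<^bsub>G\<^esub> b | a b. a \<in> prod_steps G T n \<and> b \<in> T}"

definition generates_in_steps :: "('a, 'b) monoid_scheme \<Rightarrow> 'a set \<Rightarrow> nat \<Rightarrow> bool" where
  "generates_in_steps G S n \<longleftrightarrow>
     carrier G = prod_steps G (S \<union> (\<lambda>x. inv\<^bsub>G\<^esub> x) ` S \<union> {\<one>\<^bsub>G\<^esub>}) n"

definition generates_finitely :: "('a, 'b) monoid_scheme \<Rightarrow> 'a set \<Rightarrow> bool" where
  "generates_finitely G S \<longleftrightarrow> (\<exists>n. generates_in_steps G S n)"

definition is_ultrafilter :: "nat filter \<Rightarrow> bool" where
  "is_ultrafilter U \<longleftrightarrow> U \<noteq> bot \<and> (\<forall>P. eventually P U \<or> eventually (\<lambda>x. \<not> P x) U)"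

definition non_principal :: "nat filter \<Rightarrow> bool" where
  "non_principal U \<longleftrightarrow> (\<forall>n. \<not> eventually (\<lambda>x. x = n) U)"

definition ultra_eq :: "('a, 'b) monoid_scheme \<Rightarrow> nat filter \<Rightarrow> ((nat \<Rightarrow> 'a) \<times> (nat \<Rightarrow> 'a)) set" where
  "ultra_eq G U = {(f, g). f \<in> (UNIV \<rightarrow> carrier G) \<and> g \<in> (UNIV \<rightarrow> carrier G)
                          \<and> eventually (\<lambda>n. f n = g n) U}"

definition ultrapower :: "('a, 'b) monoid_scheme \<Rightarrow> nat filter \<Rightarrow> (nat \<Rightarrow> 'a) set monoid" where
  "ultrapower G U =
     \<lparr> carrier = (UNIV \<rightarrow> carrier G) // ultra_eq G U,
       monoid.mult = (\<lambda>A B. ultra_eq G U `` {\<lambda>n. (SOME f. f \<in> A) n \<otimes>\<^bsub>G\<^esub> (SOME g. g \<in> B) n}),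
       one = ultra_eq G U `` {\<lambda>n. \<one>\<^bsub>G\<^esub>} \<rparr>"

end

theory Submission
  imports Defs
begin


lemma (in group) sub_pow:
  assumes "subgroup H G" "h \<in> H" shows "h [^] (n::nat) \<in> H"
proof (induction n)
  case 0 thus ?case using assms(1) subgroup.one_closed by simp
next
  case (Suc n)
  have "h \<in> carrier G" using assms subgroup.subset by blast
  hence "h [^] Suc n = h [^] n \<otimes> h" by simp
  thus ?case using subgroup.m_closed[OF assms(1) Suc assms(2)] by simp
qed

lemma (in comm_group) powmod:
  assumes "\<forall>q\<in>carrier G. q [^] p = \<one>" "q \<in> carrier G"
  shows "q [^] (a::nat) = q [^] (a mod p)"
proof -
  have "q [^] a = (q [^] p) [^] (a div p) \<otimes> q [^] (a mod p)"
    using assms(2) by (simp add: nat_pow_pow nat_pow_mult)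
  thus ?thesis using assms by simp
qed

lemma (in comm_group) powinv:
  assumes "\<forall>q\<in>carrier G. q [^] p = \<one>" "q \<in> carrier G" "Factorial_Ring.prime p" "\<not> p dvd i"
  shows "\<exists>k. (q [^] (i::nat)) [^] (k::nat) = q"
proof -
  have "coprime i p" using assms(3,4)
    by (metis coprime_commute prime_imp_coprime)
  have p1: "p > 1" using assms(3) prime_gt_1_nat by blast
  have i0: "i \<noteq> 0" using assms(4) by (metis dvd_0_right)
  obtain k y where ky: "i * k = p * y + gcd i p" using bezout_nat[OF i0] by blast
  have "gcd i p = 1" using \<open>coprime i p\<close> by simp
  hence "i * k = 1 + p * y" using ky by simp
  hence "(i*k) mod p = 1" using p1 by (metis mod_mult_self2 mod_less)
  hence "(q [^] i) [^] k = q [^] (1::nat)"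
    using powmod[OF assms(1,2), of "i*k"] assms(2) by (simp add: nat_pow_pow)
  thus ?thesis using assms(2) by auto
qed

lemma (in comm_group) abstract_functional:
  assumes pw: "\<forall>q\<in>carrier G. q [^] p = \<one>" and pr: "Factorial_Ring.prime p"
    and x: "x \<in> carrier G" "x \<noteq> \<one>"
  shows "\<exists>\<phi> \<in> hom G (integer_mod_group p). \<forall>j<p. \<phi> (x [^] j) = int j"
proof -
  have p1: "p > 1" using pr prime_gt_1_nat by blast
  define Fam where "Fam = {M. subgroup M G \<and> x \<notin> M}"
  have "\<exists>M\<in>Fam. \<forall>Z\<in>Fam. M \<subseteq> Z \<longrightarrow> Z = M"
  proof (rule subset_Zorn_nonempty)
    show "Fam \<noteq> {}" unfolding Fam_def using triv_subgroup x by blast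
  next
    fix C assume C: "C \<noteq> {}" "subset.chain Fam C"
    have sub: "\<And>A. A \<in> C \<Longrightarrow> subgroup A G" "\<And>A. A \<in> C \<Longrightarrow> x \<notin> A"
      using C(2) unfolding Fam_def subset.chain_def by auto
    have ch: "\<And>A B. A \<in> C \<Longrightarrow> B \<in> C \<Longrightarrow> A \<subseteq> B \<or> B \<subseteq> A"
      using C(2) unfolding subset.chain_def by blast
    have "subgroup (\<Union>C) G"
    proof (rule subgroupI)
      show "\<Union>C \<subseteq> carrier G"
      proof (rule Union_least)
        fix A assume "A \<in> C" thus "A \<subseteq> carrier G" using sub(1) subgroup.subset by metis
      qed
      obtain A0 where "A0 \<in> C" using C(1) by blast
      hence "\<one> \<in> A0" using sub(1) subgroup.one_closed by metis
      thus "\<Union>C \<noteq> {}" using \<open>A0 \<in> C\<close> by blast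
      show "inv a \<in> \<Union>C" if a: "a \<in> \<Union>C" for a
      proof -
        obtain A where A: "A \<in> C" "a \<in> A" using a by blast
        hence "inv a \<in> A" using sub(1) subgroup.m_inv_closed by metis
        thus ?thesis using A by blast
      qed
      show "a \<otimes> b \<in> \<Union>C" if ab: "a \<in> \<Union>C" "b \<in> \<Union>C" for a b
      proof -
        obtain A B where AB: "A \<in> C" "B \<in> C" "a \<in> A" "b \<in> B" using ab by blast
        show ?thesis
        proof (cases "A \<subseteq> B")
          case True
          hence "a \<otimes> b \<in> B" using AB sub(1) subgroup.m_closed by (metis subsetD)
          thus ?thesis using AB by blast
        next
          case False
          hence "B \<subseteq> A" using ch AB by blast
          hence "a \<otimes> b \<in> A" using AB sub(1) subgroup.m_closed by (metis subsetD)
          thus ?thesis using AB by blast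
        qed
      qed
    qed
    thus "\<Union>C \<in> Fam" unfolding Fam_def using sub(2) by blast
  qed
  then obtain M where MF: "M \<in> Fam" and Mmax: "\<And>Z. Z \<in> Fam \<Longrightarrow> M \<subseteq> Z \<Longrightarrow> Z = M" by blast
  have M: "subgroup M G" "x \<notin> M" using MF unfolding Fam_def by auto
  have Mc: "M \<subseteq> carrier G" using M(1) subgroup.subset by blast
  have xinM: "x [^] k \<in> M \<Longrightarrow> \<not> p dvd k \<Longrightarrow> False" for k
  proof -
    assume a: "x [^] k \<in> M" "\<not> p dvd k"
    obtain l :: nat where "(x [^] k) [^] l = x" using powinv[OF pw x(1) pr a(2)] by blast
    moreover have "(x [^] k) [^] l \<in> M" using a(1) M(1) by (rule_tac sub_pow)
    ultimately show False using M(2) by simp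
  qed
  have claim1: "\<exists>j<p. \<exists>m\<in>M. y = x [^] j \<otimes> m" if y: "y \<in> carrier G" for y
  proof (cases "y \<in> M")
    case True
    then show ?thesis using p1 y by (intro exI[of _ 0] conjI bexI[of _ y]) auto
  next
    case False
    define M' where "M' = {y [^] (i::nat) \<otimes> m | i m. m \<in> M}"
    have M'c: "M' \<subseteq> carrier G" unfolding M'_def using Mc y by auto
    have "subgroup M' G"
    proof (rule subgroupI)
      show "M' \<subseteq> carrier G" by (rule M'c)
      show "M' \<noteq> {}" unfolding M'_def using M(1) subgroup.one_closed by blast
      show "inv a \<in> M'" if aM: "a \<in> M'" for a
      proof -
        obtain i :: nat and m where im: "a = y [^] i \<otimes> m" "m \<in> M" using aM unfolding M'_def by blast
        have mc: "m \<in> carrier G" using im Mc by blast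
        have "y [^] i \<otimes> y [^] (i * (p - 1)) = \<one>"
        proof -
          have "y [^] i \<otimes> y [^] (i * (p - 1)) = y [^] (i + i * (p-1))"
            using y by (simp add: nat_pow_mult)
          also have "i + i * (p-1) = p * i" using p1
            by (metis add.commute mult.commute mult_eq_if nat_neq_iff not_less_zero)
          also have "y [^] (p * i) = \<one>" using y pw by (simp add: nat_pow_pow[symmetric])
          finally show ?thesis .
        qed
        hence iv: "inv (y [^] i) = y [^] (i * (p - 1))"
          using y by (simp add: inv_equality m_comm)
        have "inv a = y [^] (i * (p - 1)) \<otimes> inv m"
          using im mc y iv by (simp add: inv_mult m_comm)
        moreover have "inv m \<in> M" using subgroup.m_inv_closed[OF M(1) im(2)] .
        ultimately show ?thesis unfolding M'_def by blast
      qed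
      show "a \<otimes> b \<in> M'" if abM: "a \<in> M'" "b \<in> M'" for a b
      proof -
        obtain i :: nat and m where im: "a = y [^] i \<otimes> m" "m \<in> M" using abM unfolding M'_def by blast
        obtain j :: nat and n where jn: "b = y [^] j \<otimes> n" "n \<in> M" using abM unfolding M'_def by blast
        have c: "m \<in> carrier G" "n \<in> carrier G" using im jn Mc by auto
        have "a \<otimes> b = y [^] (i + j) \<otimes> (m \<otimes> n)"
          using im jn c y by (simp add: nat_pow_mult[symmetric] m_ac)
        moreover have "m \<otimes> n \<in> M" using subgroup.m_closed[OF M(1) im(2) jn(2)] .
        ultimately show ?thesis unfolding M'_def by blast
      qed
    qed
    moreover have "M \<subseteq> M'"
    proof
      fix m assume "m \<in> M" thus "m \<in> M'" unfolding M'_def using Mc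
        by (intro CollectI exI[of _ 0] exI[of _ m]) auto
    qed
    moreover have "y \<in> M'" unfolding M'_def using y M(1) subgroup.one_closed
      by (intro CollectI exI[of _ 1] exI[of _ \<one>]) auto
    ultimately have "M' \<notin> Fam" using Mmax False by blast
    hence "x \<in> M'" using \<open>subgroup M' G\<close> unfolding Fam_def by blast
    then obtain i :: nat and m where im: "x = y [^] i \<otimes> m" "m \<in> M" unfolding M'_def by blast
    have mc: "m \<in> carrier G" using im Mc by blast
    have ndvd: "\<not> p dvd i"
    proof
      assume "p dvd i"
      hence "y [^] i = \<one>" using powmod[OF pw y, of i] y by simp
      thus False using im M(2) mc by simp
    qed
    obtain k :: nat where k: "(y [^] i) [^] k = y" using powinv[OF pw y pr ndvd] by blast
    have "x [^] k = y \<otimes> m [^] k" using im mc y k by (simp add: nat_pow_distrib)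
    hence "y = x [^] k \<otimes> inv (m [^] k)" using mc y x
      by (metis inv_solve_right nat_pow_closed)
    also have "x [^] k = x [^] (k mod p)" using powmod[OF pw x(1)] .
    finally have "y = x [^] (k mod p) \<otimes> inv (m [^] k)" .
    moreover have "inv (m [^] k) \<in> M" using subgroup.m_inv_closed[OF M(1) sub_pow[OF M(1) im(2)]] .
    moreover have "k mod p < p" using p1 by simp
    ultimately show ?thesis by blast
  qed
  have uniq_lt: "j = j'" if "j < j'" "j' < p" "m \<in> M" "m' \<in> M"
      "x [^] j \<otimes> m = x [^] j' \<otimes> m'" for j j' m m'
  proof -
    have c: "m \<in> carrier G" "m' \<in> carrier G" using that Mc by auto
    have "x [^] j' = x [^] j \<otimes> x [^] (j' - j)" using x that(1)
      by (simp add: nat_pow_mult)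
    hence "x [^] j \<otimes> m = x [^] j \<otimes> (x [^] (j' - j) \<otimes> m')" using that(5) x c by (simp add: m_assoc)
    hence "m = x [^] (j' - j) \<otimes> m'" using x c by (meson l_cancel m_closed nat_pow_closed)
    hence "x [^] (j' - j) = m \<otimes> inv m'" using x c by (simp add: inv_solve_right)
    hence "x [^] (j' - j) \<in> M" using that(3,4) M(1) subgroup.m_closed subgroup.m_inv_closed by metis
    moreover have "\<not> p dvd (j' - j)" using that(1,2)
      by (metis diff_less dvd_imp_le less_imp_diff_less not_less zero_less_diff nat_dvd_not_less)
    ultimately show ?thesis using xinM by blast
  qed
  have uniq: "j = j'" if "j < p" "j' < p" "m \<in> M" "m' \<in> M"
      "x [^] j \<otimes> m = x [^] j' \<otimes> m'" for j j' m m'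
    using uniq_lt[of j j' m m'] uniq_lt[of j' j m' m] that by (metis nat_neq_iff)
  define \<phi> where "\<phi> y = int (THE j. j < p \<and> (\<exists>m\<in>M. y = x [^] j \<otimes> m))" for y
  have phi_eq: "\<phi> y = int j" if hj: "j < p" "m \<in> M" "y = x [^] j \<otimes> m" for y j m
  proof -
    have "(THE j. j < p \<and> (\<exists>m\<in>M. y = x [^] j \<otimes> m)) = j"
      using hj uniq by (intro the_equality) blast+
    thus ?thesis unfolding \<phi>_def by simp
  qed
  have "\<phi> \<in> hom G (integer_mod_group p)"
  proof (rule homI)
    fix y assume y: "y \<in> carrier G"
    then obtain j m where "j < p" "m \<in> M" "y = x [^] j \<otimes> m" using claim1 by blast
    thus "\<phi> y \<in> carrier (integer_mod_group p)" using phi_eq p1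
      by (simp add: carrier_integer_mod_group)
  next
    fix y z assume y: "y \<in> carrier G" and z: "z \<in> carrier G"
    obtain j m where jm: "j < p" "m \<in> M" "y = x [^] j \<otimes> m" using claim1 y by blast
    obtain k n where kn: "k < p" "n \<in> M" "z = x [^] k \<otimes> n" using claim1 z by blast
    have c: "m \<in> carrier G" "n \<in> carrier G" using jm kn Mc by auto
    have "y \<otimes> z = x [^] (j + k) \<otimes> (m \<otimes> n)"
      using jm kn c x by (simp add: nat_pow_mult[symmetric] m_ac)
    also have "x [^] (j + k) = x [^] ((j + k) mod p)" using powmod[OF pw x(1)] .
    finally have "\<phi> (y \<otimes> z) = int ((j + k) mod p)"
      using phi_eq[of "(j+k) mod p" "m \<otimes> n"] p1 jm(2) kn(2) M(1) subgroup.m_closed by fastforce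
    moreover have "\<phi> y = int j" "\<phi> z = int k" using phi_eq jm kn by auto
    ultimately show "\<phi> (y \<otimes> z) = \<phi> y \<otimes>\<^bsub>integer_mod_group p\<^esub> \<phi> z"
      by (simp add: zmod_int)
  qed
  moreover have "\<forall>j<p. \<phi> (x [^] j) = int j"
    using phi_eq M(1) subgroup.one_closed x by fastforce
  ultimately show ?thesis by blast
qed



definition PG :: "('a, 'b) monoid_scheme \<Rightarrow> (nat \<Rightarrow> 'a) monoid" where
  "PG G = product_group UNIV (\<lambda>_. G)"

lemma PG_carrier: "carrier (PG G) = UNIV \<rightarrow> carrier G"
  by (simp add: PG_def PiE_UNIV_domain)

lemma PG_mult: "f \<otimes>\<^bsub>PG G\<^esub> g = (\<lambda>i. f i \<otimes>\<^bsub>G\<^esub> g i)"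
  by (simp add: PG_def restrict_def)

lemma PG_one: "\<one>\<^bsub>PG G\<^esub> = (\<lambda>i. \<one>\<^bsub>G\<^esub>)"
  by (simp add: PG_def restrict_def)

lemma PG_group: "group G \<Longrightarrow> group (PG G)"
  by (simp add: PG_def)

lemma PG_inv: "group G \<Longrightarrow> f \<in> carrier (PG G) \<Longrightarrow> inv\<^bsub>PG G\<^esub> f = (\<lambda>i. inv\<^bsub>G\<^esub> f i)"
  unfolding PG_def by (subst inv_product_group) (auto simp: PiE_UNIV_domain)

lemma PG_pow: "f [^]\<^bsub>PG G\<^esub> (n::nat) = (\<lambda>i. f i [^]\<^bsub>G\<^esub> n)"
  by (induction n) (simp_all add: PG_one PG_mult)

definition T0 :: "('a, 'b) monoid_scheme \<Rightarrow> nat \<Rightarrow> 'a set" where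
  "T0 G p = pow_comm_values G p \<union> (\<lambda>x. inv\<^bsub>G\<^esub> x) ` pow_comm_values G p \<union> {\<one>\<^bsub>G\<^esub>}"

abbreviation ST where "ST G p k \<equiv> prod_steps G (T0 G p) k"

context group begin

lemma pcv_sub: "pow_comm_values G p \<subseteq> carrier G"
  unfolding pow_comm_values_def grp_comm_def by auto

lemma T0_sub: "T0 G p \<subseteq> carrier G"
  unfolding T0_def using pcv_sub by auto

lemma T0_inv: "x \<in> T0 G p \<Longrightarrow> inv x \<in> T0 G p"
  unfolding T0_def using pcv_sub[of p] by (auto simp: subset_iff)

lemma ST_sub: "ST G p k \<subseteq> carrier G"
  using T0_sub by (induction k) auto

lemma ST_one: "\<one> \<in> ST G p k"
proof (induction k)
  case (Suc k)
  have "\<one> = \<one> \<otimes> \<one>" by simp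
  thus ?case using Suc unfolding prod_steps.simps T0_def by blast
qed simp

lemma ST_mono1: "a \<in> ST G p k \<Longrightarrow> a \<in> ST G p (Suc k)"
proof -
  assume a: "a \<in> ST G p k"
  hence "a = a \<otimes> \<one>" using ST_sub[of p k] by auto
  thus ?thesis using a unfolding prod_steps.simps T0_def by blast
qed

lemma ST_mono: "k \<le> n \<Longrightarrow> ST G p k \<subseteq> ST G p n"
proof (induction n rule: dec_induct)
  case (step n) thus ?case using ST_mono1 by blast
qed simp

lemma ST_mult: "a \<in> ST G p k \<Longrightarrow> b \<in> ST G p l \<Longrightarrow> a \<otimes> b \<in> ST G p (k + l)"
proof (induction l arbitrary: b)
  case 0
  then show ?case using ST_sub[of p k] by auto
next
  case (Suc l)
  then obtain c t where ct: "b = c \<otimes> t" "c \<in> ST G p l" "t \<in> T0 G p" by auto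
  have cc: "a \<in> carrier G" "c \<in> carrier G" "t \<in> carrier G"
    using ct Suc.prems ST_sub[of p k] ST_sub[of p l] T0_sub[of p] by auto
  have "a \<otimes> b = (a \<otimes> c) \<otimes> t" using ct cc by (simp add: m_assoc)
  moreover have "a \<otimes> c \<in> ST G p (k + l)" using Suc.IH Suc.prems ct by blast
  ultimately show ?case using ct by auto
qed

lemma T0_ST1: "t \<in> T0 G p \<Longrightarrow> t \<in> ST G p 1"
proof -
  assume t: "t \<in> T0 G p"
  hence "t = \<one> \<otimes> t" using T0_sub[of p] by auto
  thus ?thesis using t by auto
qed

lemma ST_inv: "a \<in> ST G p k \<Longrightarrow> inv a \<in> ST G p k"
proof (induction k arbitrary: a)
  case 0 thus ?case by simp
next
  case (Suc k)
  then obtain c t where ct: "a = c \<otimes> t" "c \<in> ST G p k" "t \<in> T0 G p" by auto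
  have cc: "c \<in> carrier G" "t \<in> carrier G" using ct ST_sub[of p k] T0_sub[of p] by auto
  have "inv a = inv t \<otimes> inv c" using ct cc by (simp add: inv_mult_group)
  moreover have "inv t \<in> ST G p 1" using T0_ST1 T0_inv ct by blast
  moreover have "inv c \<in> ST G p k" using Suc.IH ct by blast
  ultimately show ?case using ST_mult by fastforce
qed

lemma pow_ST1: "g \<in> carrier G \<Longrightarrow> g [^] p \<in> ST G p 1"
  by (rule T0_ST1) (auto simp: T0_def pow_comm_values_def)

lemma comm_ST1: "g \<in> carrier G \<Longrightarrow> h \<in> carrier G \<Longrightarrow> grp_comm G g h \<in> ST G p 1"
  by (rule T0_ST1) (auto simp: T0_def pow_comm_values_def)

end



definition Wset :: "('a, 'b) monoid_scheme \<Rightarrow> nat \<Rightarrow> nat filter \<Rightarrow> (nat \<Rightarrow> 'a) set" where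
  "Wset G p U = {f. f \<in> UNIV \<rightarrow> carrier G \<and> (\<exists>k. eventually (\<lambda>n. f n \<in> ST G p k) U)}"

lemma W_normal:
  assumes G: "group G"
  shows "Wset G p U \<lhd> PG G"
proof -
  interpret G: group G by (rule G)
  interpret P: group "PG G" by (rule PG_group[OF G])
  have sub: "subgroup (Wset G p U) (PG G)"
  proof (rule P.subgroupI)
    show "Wset G p U \<subseteq> carrier (PG G)" unfolding Wset_def PG_carrier by blast
    have "(\<lambda>n. \<one>\<^bsub>G\<^esub>) \<in> Wset G p U" unfolding Wset_def
      by (auto intro!: exI[of _ 0])
    thus "Wset G p U \<noteq> {}" by blast
  next
    fix a assume a: "a \<in> Wset G p U"
    then obtain k where k: "eventually (\<lambda>n. a n \<in> ST G p k) U" and ac: "a \<in> UNIV \<rightarrow> carrier G"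
      unfolding Wset_def by blast
    have "eventually (\<lambda>n. inv\<^bsub>G\<^esub> a n \<in> ST G p k) U"
      using k by (rule eventually_mono) (rule G.ST_inv)
    moreover have "(\<lambda>n. inv\<^bsub>G\<^esub> a n) \<in> UNIV \<rightarrow> carrier G" using ac by auto
    moreover have "a \<in> carrier (PG G)" using ac by (simp add: PG_carrier)
    ultimately show "inv\<^bsub>PG G\<^esub> a \<in> Wset G p U"
      unfolding Wset_def using PG_inv[OF G] by auto
  next
    fix a b assume a: "a \<in> Wset G p U" and b: "b \<in> Wset G p U"
    obtain k where k: "eventually (\<lambda>n. a n \<in> ST G p k) U" and ac: "a \<in> UNIV \<rightarrow> carrier G"
      using a unfolding Wset_def by blast
    obtain l where l: "eventually (\<lambda>n. b n \<in> ST G p l) U" and bc: "b \<in> UNIV \<rightarrow> carrier G"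
      using b unfolding Wset_def by blast
    have "eventually (\<lambda>n. a n \<otimes>\<^bsub>G\<^esub> b n \<in> ST G p (k + l)) U"
      using eventually_conj[OF k l] by (rule eventually_mono) (blast intro: G.ST_mult)
    moreover have "(\<lambda>n. a n \<otimes>\<^bsub>G\<^esub> b n) \<in> UNIV \<rightarrow> carrier G" using ac bc by auto
    ultimately show "a \<otimes>\<^bsub>PG G\<^esub> b \<in> Wset G p U" unfolding PG_mult Wset_def by blast
  qed
  show ?thesis
  proof (subst P.normal_inv_iff, intro conjI ballI sub)
    fix x h assume x: "x \<in> carrier (PG G)" and h: "h \<in> Wset G p U"
    obtain k where k: "eventually (\<lambda>n. h n \<in> ST G p k) U" and hc: "h \<in> UNIV \<rightarrow> carrier G"
      using h unfolding Wset_def by blast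
    have xc: "x \<in> UNIV \<rightarrow> carrier G" using x by (simp add: PG_carrier)
    have eq: "x n \<otimes>\<^bsub>G\<^esub> h n \<otimes>\<^bsub>G\<^esub> inv\<^bsub>G\<^esub> x n
          = h n \<otimes>\<^bsub>G\<^esub> grp_comm G (h n) (inv\<^bsub>G\<^esub> x n)" for n
    proof -
      have c: "x n \<in> carrier G" "h n \<in> carrier G" using xc hc by auto
      show ?thesis unfolding grp_comm_def using c
        by (simp add: G.m_assoc[symmetric] G.r_inv G.inv_inv)
    qed
    have "eventually (\<lambda>n. x n \<otimes>\<^bsub>G\<^esub> h n \<otimes>\<^bsub>G\<^esub> inv\<^bsub>G\<^esub> x n \<in> ST G p (k + 1)) U"
    proof (rule eventually_mono[OF k])
      fix n assume "h n \<in> ST G p k"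
      moreover have "grp_comm G (h n) (inv\<^bsub>G\<^esub> x n) \<in> ST G p 1"
        using xc hc by (intro G.comm_ST1) auto
      ultimately show "x n \<otimes>\<^bsub>G\<^esub> h n \<otimes>\<^bsub>G\<^esub> inv\<^bsub>G\<^esub> x n \<in> ST G p (k + 1)"
        unfolding eq by (rule G.ST_mult)
    qed
    moreover have "(\<lambda>n. x n \<otimes>\<^bsub>G\<^esub> h n \<otimes>\<^bsub>G\<^esub> inv\<^bsub>G\<^esub> x n) \<in> UNIV \<rightarrow> carrier G"
      using xc hc by auto
    ultimately show "x \<otimes>\<^bsub>PG G\<^esub> h \<otimes>\<^bsub>PG G\<^esub> inv\<^bsub>PG G\<^esub> x \<in> Wset G p U"
      unfolding PG_mult PG_inv[OF G x] Wset_def by blast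
  qed
qed


lemma W_eq_cos:
  assumes G: "group G" and f: "f \<in> UNIV \<rightarrow> carrier G" and g: "g \<in> UNIV \<rightarrow> carrier G"
    and ev: "eventually (\<lambda>n. f n = g n) U"
  shows "Wset G p U #>\<^bsub>PG G\<^esub> f = Wset G p U #>\<^bsub>PG G\<^esub> g"
proof -
  interpret G: group G by (rule G)
  interpret P: group "PG G" by (rule PG_group[OF G])
  interpret N: normal "Wset G p U" "PG G" by (rule W_normal[OF G])
  have fc: "f \<in> carrier (PG G)" and gc: "g \<in> carrier (PG G)" using f g by (simp_all add: PG_carrier)
  have e: "f \<otimes>\<^bsub>PG G\<^esub> inv\<^bsub>PG G\<^esub> g = (\<lambda>n. f n \<otimes>\<^bsub>G\<^esub> inv\<^bsub>G\<^esub> g n)"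
    by (simp add: PG_mult PG_inv[OF G gc])
  have "eventually (\<lambda>n. f n \<otimes>\<^bsub>G\<^esub> inv\<^bsub>G\<^esub> g n \<in> ST G p 0) U"
  proof (rule eventually_mono[OF ev])
    fix n assume "f n = g n"
    thus "f n \<otimes>\<^bsub>G\<^esub> inv\<^bsub>G\<^esub> g n \<in> ST G p 0" using g by (auto simp: Pi_iff)
  qed
  moreover have "(\<lambda>n. f n \<otimes>\<^bsub>G\<^esub> inv\<^bsub>G\<^esub> g n) \<in> UNIV \<rightarrow> carrier G" using f g by auto
  ultimately have "f \<otimes>\<^bsub>PG G\<^esub> inv\<^bsub>PG G\<^esub> g \<in> Wset G p U" unfolding e Wset_def by blast
  hence "f \<in> Wset G p U #>\<^bsub>PG G\<^esub> g" using N.rcos_module_rev[OF P.group_axioms gc fc] by blast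
  hence "Wset G p U #>\<^bsub>PG G\<^esub> g = Wset G p U #>\<^bsub>PG G\<^esub> f"
    using P.repr_independence[OF _ gc N.subgroup_axioms] by blast
  thus ?thesis by simp
qed

lemma W_pow:
  assumes G: "group G" and f: "f \<in> carrier (PG G)"
  shows "f [^]\<^bsub>PG G\<^esub> p \<in> Wset G p U"
proof -
  interpret G: group G by (rule G)
  have fc: "f \<in> UNIV \<rightarrow> carrier G" using f by (simp add: PG_carrier)
  have "eventually (\<lambda>n. f n [^]\<^bsub>G\<^esub> p \<in> ST G p 1) U"
    using fc by (intro always_eventually allI G.pow_ST1) auto
  moreover have "(\<lambda>n. f n [^]\<^bsub>G\<^esub> p) \<in> UNIV \<rightarrow> carrier G" using fc by auto
  ultimately show ?thesis unfolding PG_pow Wset_def by blast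
qed

lemma W_comm:
  assumes G: "group G" and a: "a \<in> carrier (PG G)" and b: "b \<in> carrier (PG G)"
  shows "(a \<otimes>\<^bsub>PG G\<^esub> b) \<otimes>\<^bsub>PG G\<^esub> inv\<^bsub>PG G\<^esub> (b \<otimes>\<^bsub>PG G\<^esub> a) \<in> Wset G p U"
proof -
  interpret G: group G by (rule G)
  interpret P: group "PG G" by (rule PG_group[OF G])
  have ac: "a \<in> UNIV \<rightarrow> carrier G" and bc: "b \<in> UNIV \<rightarrow> carrier G"
    using a b by (simp_all add: PG_carrier)
  have ba: "b \<otimes>\<^bsub>PG G\<^esub> a \<in> carrier (PG G)" using a b by simp
  have eq: "(a \<otimes>\<^bsub>PG G\<^esub> b) \<otimes>\<^bsub>PG G\<^esub> inv\<^bsub>PG G\<^esub> (b \<otimes>\<^bsub>PG G\<^esub> a)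
      = (\<lambda>n. grp_comm G (inv\<^bsub>G\<^esub> a n) (inv\<^bsub>G\<^esub> b n))"
  proof
    fix n
    have c: "a n \<in> carrier G" "b n \<in> carrier G" using ac bc by auto
    show "((a \<otimes>\<^bsub>PG G\<^esub> b) \<otimes>\<^bsub>PG G\<^esub> inv\<^bsub>PG G\<^esub> (b \<otimes>\<^bsub>PG G\<^esub> a)) n
        = grp_comm G (inv\<^bsub>G\<^esub> a n) (inv\<^bsub>G\<^esub> b n)"
      unfolding PG_inv[OF G ba] unfolding PG_mult grp_comm_def
      using c by (simp add: G.inv_mult_group G.m_assoc)
  qed
  have "eventually (\<lambda>n. grp_comm G (inv\<^bsub>G\<^esub> a n) (inv\<^bsub>G\<^esub> b n) \<in> ST G p 1) U"
    using ac bc by (intro always_eventually allI G.comm_ST1) auto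
  moreover have "(\<lambda>n. grp_comm G (inv\<^bsub>G\<^esub> a n) (inv\<^bsub>G\<^esub> b n)) \<in> UNIV \<rightarrow> carrier G"
    using ac bc unfolding grp_comm_def by (auto simp: Pi_iff)
  ultimately show ?thesis unfolding eq Wset_def by blast
qed



lemma rep_cos:
  assumes G: "group G" and f: "f \<in> UNIV \<rightarrow> carrier G"
  shows "(SOME g. g \<in> ultra_eq G U `` {f}) \<in> UNIV \<rightarrow> carrier G \<and>
         Wset G p U #>\<^bsub>PG G\<^esub> (SOME g. g \<in> ultra_eq G U `` {f}) = Wset G p U #>\<^bsub>PG G\<^esub> f"
proof -
  have "f \<in> ultra_eq G U `` {f}" using f unfolding ultra_eq_def by (auto intro: always_eventually)
  hence "(SOME g. g \<in> ultra_eq G U `` {f}) \<in> ultra_eq G U `` {f}"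
    using someI[of "\<lambda>g. g \<in> ultra_eq G U `` {f}"] by blast
  then obtain g where g: "g = (SOME g. g \<in> ultra_eq G U `` {f})" "g \<in> UNIV \<rightarrow> carrier G"
    "eventually (\<lambda>n. f n = g n) U" unfolding ultra_eq_def by auto
  have "Wset G p U #>\<^bsub>PG G\<^esub> g = Wset G p U #>\<^bsub>PG G\<^esub> f"
    using W_eq_cos[OF G f g(2) g(3)] by simp
  thus ?thesis using g by simp
qed

theorem lemma1:
  fixes G :: "('a, 'b) monoid_scheme" and p :: nat
  assumes "group G" and "Factorial_Ring.prime p"
    and "\<not> generates_finitely G (pow_comm_values G p)"
  shows "\<forall>U. is_ultrafilter U \<and> non_principal U \<longrightarrow>
           (\<exists>h. h \<in> hom (ultrapower G U) (integer_mod_group p)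
                \<and> h ` carrier (ultrapower G U) = carrier (integer_mod_group p))"
proof (intro allI impI)
  fix U assume U: "is_ultrafilter U \<and> non_principal U"
  have Ubot: "U \<noteq> bot" using U unfolding is_ultrafilter_def by blast
  have evge: "eventually (\<lambda>n. k \<le> n) U" for k
  proof -
    have "\<forall>m\<in>{..<k}. eventually (\<lambda>n. n \<noteq> m) U"
      using U unfolding is_ultrafilter_def non_principal_def by blast
    hence "eventually (\<lambda>n. \<forall>m\<in>{..<k}. n \<noteq> m) U" by (intro eventually_ball_finite) auto
    thus ?thesis by (rule eventually_mono) (auto simp: not_le[symmetric])
  qed
  note G = assms(1)
  interpret G: group G by (rule G)
  define P where "P = PG G"
  define W where "W = Wset G p U"
  interpret P: group P unfolding P_def by (rule PG_group[OF G])
  interpret N: normal W P unfolding W_def P_def by (rule W_normal[OF G])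
  define Q where "Q = P Mod W"
  have Qg: "group Q" unfolding Q_def by (rule N.factorgroup_is_group)
  have cQ: "carrier Q = (\<lambda>a. W #>\<^bsub>P\<^esub> a) ` carrier P" unfolding Q_def by (rule carrier_FactGroup)
  have hom_pi: "(\<lambda>a. W #>\<^bsub>P\<^esub> a) \<in> hom P Q" unfolding Q_def by (rule N.r_coset_hom_Mod)
  have Qcomm: "comm_group Q"
  proof (rule group.group_comm_groupI[OF Qg])
    fix u v assume "u \<in> carrier Q" "v \<in> carrier Q"
    then obtain a b where ab: "a \<in> carrier P" "b \<in> carrier P" "u = W #>\<^bsub>P\<^esub> a" "v = W #>\<^bsub>P\<^esub> b"
      using cQ by auto
    have "a \<otimes>\<^bsub>P\<^esub> b \<in> W #>\<^bsub>P\<^esub> (b \<otimes>\<^bsub>P\<^esub> a)"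
      using N.rcos_module_rev[OF P.group_axioms _ _ W_comm[OF G, of a b p U, folded P_def W_def]] ab
      by simp
    hence "W #>\<^bsub>P\<^esub> (b \<otimes>\<^bsub>P\<^esub> a) = W #>\<^bsub>P\<^esub> (a \<otimes>\<^bsub>P\<^esub> b)"
      using P.repr_independence[OF _ _ N.subgroup_axioms] ab by simp
    thus "u \<otimes>\<^bsub>Q\<^esub> v = v \<otimes>\<^bsub>Q\<^esub> u"
      using ab hom_pi unfolding hom_def by simp
  qed
  have pw: "\<forall>q\<in>carrier Q. q [^]\<^bsub>Q\<^esub> p = \<one>\<^bsub>Q\<^esub>"
  proof
    fix q assume "q \<in> carrier Q"
    then obtain a where a: "a \<in> carrier P" "q = W #>\<^bsub>P\<^esub> a" using cQ by auto
    have "q [^]\<^bsub>Q\<^esub> p = W #>\<^bsub>P\<^esub> (a [^]\<^bsub>P\<^esub> p)" unfolding Q_def a(2)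
      by (rule N.FactGroup_pow[OF a(1)])
    also have "\<dots> = W" using N.rcos_const[OF P.group_axioms W_pow[OF G, of a p U, folded P_def W_def]] a
      by (simp add: P_def)
    finally show "q [^]\<^bsub>Q\<^esub> p = \<one>\<^bsub>Q\<^esub>" unfolding Q_def by simp
  qed
  have STsub: "\<And>k. ST G p k \<subseteq> carrier G" by (rule G.ST_sub)
  have ex: "\<exists>g. g \<in> carrier G \<and> g \<notin> ST G p k" for k
  proof -
    have "carrier G \<noteq> ST G p k" using assms(3)
      unfolding generates_finitely_def generates_in_steps_def T0_def by blast
    thus ?thesis using STsub[of k] by blast
  qed
  define xs where "xs = (\<lambda>k. SOME g. g \<in> carrier G \<and> g \<notin> ST G p k)"
  have xs: "xs k \<in> carrier G" "xs k \<notin> ST G p k" for k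
    using someI_ex[OF ex[of k]] unfolding xs_def by auto
  have xsP: "xs \<in> carrier P" unfolding P_def PG_carrier using xs by auto
  have xsW: "xs \<notin> W"
  proof
    assume "xs \<in> W"
    then obtain k where k: "eventually (\<lambda>n. xs n \<in> ST G p k) U" unfolding W_def Wset_def by blast
    obtain n where n: "xs n \<in> ST G p k" "k \<le> n"
      using eventually_happens'[OF Ubot eventually_conj[OF k evge[of k]]] by blast
    thus False using G.ST_mono[OF n(2)] xs(2)[of n] by blast
  qed
  define xb where "xb = W #>\<^bsub>P\<^esub> xs"
  have xbQ: "xb \<in> carrier Q" unfolding xb_def cQ using xsP by blast
  have xb1: "xb \<noteq> \<one>\<^bsub>Q\<^esub>"
  proof
    assume "xb = \<one>\<^bsub>Q\<^esub>"
    hence "W #>\<^bsub>P\<^esub> xs = W" unfolding xb_def Q_def by simp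
    thus False using P.rcos_self[OF xsP N.subgroup_axioms] xsW by simp
  qed
  obtain \<phi> where phi: "\<phi> \<in> hom Q (integer_mod_group p)" "\<forall>j<p. \<phi> (xb [^]\<^bsub>Q\<^esub> j) = int j"
    using comm_group.abstract_functional[OF Qcomm pw assms(2) xbQ xb1] by blast
  define E where "E = ultra_eq G U"
  define h where "h A = \<phi> (W #>\<^bsub>P\<^esub> (SOME f. f \<in> A))" for A
  have hcls: "h (E `` {f}) = \<phi> (W #>\<^bsub>P\<^esub> f)" if f: "f \<in> UNIV \<rightarrow> carrier G" for f
    using rep_cos[OF G f, of U p] unfolding h_def E_def W_def P_def by simp
  have cU: "carrier (ultrapower G U) = (UNIV \<rightarrow> carrier G) // E"
    unfolding ultrapower_def E_def by simp
  have phic: "\<phi> u \<in> carrier (integer_mod_group p)" if "u \<in> carrier Q" for u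
    using phi(1) that unfolding hom_def by blast
  have hc: "h A \<in> carrier (integer_mod_group p)" if A: "A \<in> carrier (ultrapower G U)" for A
  proof -
    obtain f where f: "A = E `` {f}" "f \<in> UNIV \<rightarrow> carrier G" using A cU by (auto elim: quotientE)
    have "W #>\<^bsub>P\<^esub> f \<in> carrier Q" unfolding cQ using f(2) by (simp add: P_def PG_carrier)
    thus ?thesis using hcls[OF f(2)] phic f(1) by simp
  qed
  have "h \<in> hom (ultrapower G U) (integer_mod_group p)"
  proof (rule homI)
    fix A assume "A \<in> carrier (ultrapower G U)" thus "h A \<in> carrier (integer_mod_group p)" by (rule hc)
  next
    fix A B assume A: "A \<in> carrier (ultrapower G U)" and B: "B \<in> carrier (ultrapower G U)"
    obtain f where f: "A = E `` {f}" "f \<in> UNIV \<rightarrow> carrier G" using A cU by (auto elim: quotientE)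
    obtain g where g: "B = E `` {g}" "g \<in> UNIV \<rightarrow> carrier G" using B cU by (auto elim: quotientE)
    define ra where "ra = (SOME f. f \<in> A)"
    define rb where "rb = (SOME f. f \<in> B)"
    have ra: "ra \<in> UNIV \<rightarrow> carrier G" using rep_cos[OF G f(2), of U p] f(1) unfolding ra_def E_def by simp
    have rb: "rb \<in> UNIV \<rightarrow> carrier G" using rep_cos[OF G g(2), of U p] g(1) unfolding rb_def E_def by simp
    have raP: "ra \<in> carrier P" and rbP: "rb \<in> carrier P" using ra rb by (simp_all add: P_def PG_carrier)
    have AB: "A \<otimes>\<^bsub>ultrapower G U\<^esub> B = E `` {ra \<otimes>\<^bsub>P\<^esub> rb}"
      unfolding ultrapower_def ra_def rb_def E_def P_def PG_mult by simp
    have "ra \<otimes>\<^bsub>P\<^esub> rb \<in> UNIV \<rightarrow> carrier G" using P.m_closed[OF raP rbP] unfolding P_def PG_carrier .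
    hence "h (A \<otimes>\<^bsub>ultrapower G U\<^esub> B) = \<phi> (W #>\<^bsub>P\<^esub> (ra \<otimes>\<^bsub>P\<^esub> rb))" using AB hcls by simp
    also have "W #>\<^bsub>P\<^esub> (ra \<otimes>\<^bsub>P\<^esub> rb) = (W #>\<^bsub>P\<^esub> ra) \<otimes>\<^bsub>Q\<^esub> (W #>\<^bsub>P\<^esub> rb)"
      using hom_pi raP rbP unfolding hom_def by simp
    also have "\<phi> \<dots> = \<phi> (W #>\<^bsub>P\<^esub> ra) \<otimes>\<^bsub>integer_mod_group p\<^esub> \<phi> (W #>\<^bsub>P\<^esub> rb)"
      using phi(1) raP rbP unfolding hom_def cQ by simp
    also have "\<dots> = h A \<otimes>\<^bsub>integer_mod_group p\<^esub> h B" unfolding h_def ra_def rb_def by simp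
    finally show "h (A \<otimes>\<^bsub>ultrapower G U\<^esub> B) = h A \<otimes>\<^bsub>integer_mod_group p\<^esub> h B" .
  qed
  moreover have "h ` carrier (ultrapower G U) = carrier (integer_mod_group p)"
  proof
    show "h ` carrier (ultrapower G U) \<subseteq> carrier (integer_mod_group p)" using hc by blast
  next
    show "carrier (integer_mod_group p) \<subseteq> h ` carrier (ultrapower G U)"
    proof
      fix z assume z: "z \<in> carrier (integer_mod_group p)"
      have p0: "p \<noteq> 0" using assms(2) by auto
      define j where "j = nat z"
      have jz: "int j = z" "j < p" using z p0 unfolding j_def by (auto simp: carrier_integer_mod_group)
      have xj: "xs [^]\<^bsub>P\<^esub> j \<in> carrier P" using xsP by simp
      hence xj': "xs [^]\<^bsub>P\<^esub> j \<in> UNIV \<rightarrow> carrier G" by (simp add: P_def PG_carrier)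
      have "h (E `` {xs [^]\<^bsub>P\<^esub> j}) = \<phi> (W #>\<^bsub>P\<^esub> (xs [^]\<^bsub>P\<^esub> j))" by (rule hcls[OF xj'])
      also have "W #>\<^bsub>P\<^esub> (xs [^]\<^bsub>P\<^esub> j) = xb [^]\<^bsub>Q\<^esub> j"
        unfolding xb_def Q_def by (rule N.FactGroup_pow[OF xsP, symmetric])
      also have "\<phi> \<dots> = z" using phi(2) jz by simp
      finally have "h (E `` {xs [^]\<^bsub>P\<^esub> j}) = z" .
      moreover have "E `` {xs [^]\<^bsub>P\<^esub> j} \<in> carrier (ultrapower G U)"
        unfolding cU using xj' by (rule quotientI)
      ultimately show "z \<in> h ` carrier (ultrapower G U)" by blast
    qed
  qed
  ultimately show "\<exists>h. h \<in> hom (ultrapower G U) (integer_mod_group p)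
                \<and> h ` carrier (ultrapower G U) = carrier (integer_mod_group p)" by blast
qed


end
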